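(* Let $(\mathbf r(t),\mathbf v(t))\in\Omega$, $t\ge0$, be a stationary solution of the three-dimensional equations of motion, and let $\mathbf L$ be its (constant) angular momentum. If there is at least one time $t_0\ge0$ at which the minimum possible root-mean-square size of the system is achieved, i.e. $g(\mathbf r(t_0))=W(\mathbf L,T(\mathbf v(t_0)))$, then this trajectory is flat (all particles move in one fixed plane).
   Context: Fix $N\ge2$, masses $m_i>0$, $\gamma>0$. $\mathfrak R_3=\{\mathbf r=(\mathbf r_1,\dots,\mathbf r_N)\in(\mathbb R^3)^N:\mathbf r_i\ne\mathbf r_j,\ i\ne j\}$, phase space $\Omega=\mathfrak R_3\times(\mathbb R^3)^N$. Equations of motion: $\dot{\mathbf r}_i=\mathbf v_i$, $m_i\dot{\mathbf v}_i=\sum_{j\ne i}\gamma m_im_j(\mathbf r_j-\mathbf r_i)/|\mathbf r_j-\mathbf r_i|^3$. A solution is stationary if there are $0<C_1\le C_2<\infty$ with $C_1\le|\mathbf r_j(t)-\mathbf r_i(t)|\le C_2$ for all $i\ne j$, $t\ge0$. $\mathbf L(\mathbf r,\mathbf v)=\sum_im_i\mathbf r_i\times\mathbf v_i$, $T(\mathbf v)=\frac12\sum_im_i|\mathbf v_i|^2$, $g(\mathbf r)=\sum_im_i|\mathbf r_i|^2$ (so the root-mean-square size is $b=\sqrt{g/\sum_jm_j}$). For $\mathbf L\in\mathbb R^3$, $T\ge0$: $W(\mathbf L,T)=\inf\{g(\mathbf r):(\mathbf r,\mathbf v)\in\Omega,\ \mathbf L(\mathbf r,\mathbf v)=\mathbf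 L,\ T(\mathbf v)=T\}$. Since the total energy $T-f$ (with $f(\mathbf r)=\sum_{i<j}\gamma m_im_j/|\mathbf r_j-\mathbf r_i|$) is conserved, $T(\mathbf v(t))$ is determined by the current cohesion $f(\mathbf r(t))$. *)

theory Defs
  imports "HOL-Analysis.Analysis" "HOL-Analysis.Cross3"
begin

text \<open>Configurations of N particles in R^3: functions nat => real^3, only indices i < N matter.\<close>

definition in_R3 :: "nat \<Rightarrow> (nat \<Rightarrow> real^3) \<Rightarrow> bool" where
  "in_R3 N r \<longleftrightarrow> (\<forall>i<N. \<forall>j<N. i \<noteq> j \<longrightarrow> r i \<noteq> r j)"

definition ang_mom :: "nat \<Rightarrow> (nat \<Rightarrow> real) \<Rightarrow> (nat \<Rightarrow> real^3) \<Rightarrow> (nat \<Rightarrow> real^3) \<Rightarrow> real^3" where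
  "ang_mom N m r v = (\<Sum>i<N. m i *\<^sub>R cross3 (r i) (v i))"

definition kin :: "nat \<Rightarrow> (nat \<Rightarrow> real) \<Rightarrow> (nat \<Rightarrow> real^3) \<Rightarrow> real" where
  "kin N m v = (1/2) * (\<Sum>i<N. m i * (norm (v i))\<^sup>2)"

definition gmom :: "nat \<Rightarrow> (nat \<Rightarrow> real) \<Rightarrow> (nat \<Rightarrow> real^3) \<Rightarrow> real" where
  "gmom N m r = (\<Sum>i<N. m i * (norm (r i))\<^sup>2)"

definition Wfun :: "nat \<Rightarrow> (nat \<Rightarrow> real) \<Rightarrow> real^3 \<Rightarrow> real \<Rightarrow> real" where
  "Wfun N m L T = Inf {gmom N m r | r v. in_R3 N r \<and> ang_mom N m r v = L \<and> kin N m v = T}"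

definition accel :: "nat \<Rightarrow> (nat \<Rightarrow> real) \<Rightarrow> real \<Rightarrow> (nat \<Rightarrow> real^3) \<Rightarrow> nat \<Rightarrow> real^3" where
  "accel N m \<gamma> r i = (\<Sum>j\<in>{..<N} - {i}. (\<gamma> * m j / (norm (r j - r i))^3) *\<^sub>R (r j - r i))"

text \<open>(r,v) is a solution on t >= 0 of the equations of motion, staying in Omega.
  (m_i dv_i/dt = sum gamma m_i m_j ..., divided by m_i > 0.)\<close>
definition is_solution :: "nat \<Rightarrow> (nat \<Rightarrow> real) \<Rightarrow> real \<Rightarrow> (real \<Rightarrow> nat \<Rightarrow> real^3) \<Rightarrow> (real \<Rightarrow> nat \<Rightarrow> real^3) \<Rightarrow> bool" where
  "is_solution N m \<gamma> r v \<longleftrightarrow>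
     (\<forall>t\<ge>0. in_R3 N (r t) \<and>
        (\<forall>i<N. ((\<lambda>s. r s i) has_vector_derivative v t i) (at t within {0..}) \<and>
               ((\<lambda>s. v s i) has_vector_derivative accel N m \<gamma> (r t) i) (at t within {0..})))"

definition stationary :: "nat \<Rightarrow> (real \<Rightarrow> nat \<Rightarrow> real^3) \<Rightarrow> bool" where
  "stationary N r \<longleftrightarrow> (\<exists>C1 C2. 0 < C1 \<and> C1 \<le> C2 \<and>
     (\<forall>t\<ge>0. \<forall>i<N. \<forall>j<N. i \<noteq> j \<longrightarrow> C1 \<le> norm (r t j - r t i) \<and> norm (r t j - r t i) \<le> C2))"

definition flat :: "nat \<Rightarrow> (real \<Rightarrow> nat \<Rightarrow> real^3) \<Rightarrow> bool" where
  "flat N r \<longleftrightarrow> (\<exists>n::real^3. \<exists>c. n \<noteq> 0 \<and> (\<forall>t\<ge>0. \<forall>i<N. n \<bullet> r t i = c))"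

end

theory Submission
  imports Defs
begin


lemma antisym_sum0:
  fixes f :: "nat \<Rightarrow> nat \<Rightarrow> 'a::real_vector"
  assumes "\<And>i j. f j i = - f i j"
  shows "(\<Sum>i<N. \<Sum>j<N. f i j) = 0"
proof -
  let ?S = "(\<Sum>i<N. \<Sum>j<N. f i j)"
  have "?S = (\<Sum>j<N. \<Sum>i<N. f i j)" by (rule sum.swap)
  also have "\<dots> = (\<Sum>j<N. \<Sum>i<N. - f j i)" by (intro sum.cong refl assms)
  also have "\<dots> = - ?S" by (simp add: sum_negf)
  finally have "?S + ?S = 0" by (metis add.right_inverse)
  then have "(2::real) *\<^sub>R ?S = 0" by (simp add: scaleR_2)
  then show ?thesis by simp
qed

lemma accel_sum0:
  "(\<Sum>i<N. m i *\<^sub>R cross3 (r i) (accel N m \<gamma> r i)) = 0"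
proof -
  define F where "F i j = (m i * (\<gamma> * m j) / norm (r j - r i) ^ 3) *\<^sub>R cross3 (r i) (r j)" for i j
  have lin: "linear (\<lambda>y. cross3 x y)" for x using bilinear_cross unfolding bilinear_def by auto
  have "m i *\<^sub>R cross3 (r i) (accel N m \<gamma> r i) = (\<Sum>j<N. F i j)" if "i < N" for i
  proof -
    have "m i *\<^sub>R cross3 (r i) (accel N m \<gamma> r i) = (\<Sum>j\<in>{..<N}-{i}. F i j)"
      unfolding accel_def
      by (simp add: linear_sum[OF lin] scaleR_sum_right F_def cross_mult_right Cross3.right_diff_distrib)
    also have "\<dots> = (\<Sum>j<N. F i j)"
      by (rule sum.mono_neutral_left) (auto simp: F_def)
    finally show ?thesis .
  qed
  then have "(\<Sum>i<N. m i *\<^sub>R cross3 (r i) (accel N m \<gamma> r i)) = (\<Sum>i<N. \<Sum>j<N. F i j)"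
    by simp
  also have "\<dots> = 0"
  proof (rule antisym_sum0)
    fix i j
    have c: "cross3 (r j) (r i) = - cross3 (r i) (r j)" by (rule cross_skew)
    have nm: "norm (r i - r j) = norm (r j - r i)" by (rule norm_minus_commute)
    show "F j i = - F i j" unfolding F_def c nm by (simp add: mult_ac)
  qed
  finally show ?thesis .
qed

lemma bb_cross: "bounded_bilinear cross3"
  using bilinear_conv_bounded_bilinear bilinear_cross by blast

lemma ang_const:
  assumes sol: "is_solution N m \<gamma> r v" and t: "t \<ge> 0"
  shows "ang_mom N m (r t) (v t) = ang_mom N m (r 0) (v 0)"
proof -
  have hz: "((\<lambda>s. ang_mom N m (r s) (v s)) has_vector_derivative 0) (at x within {0..})" if "x \<in> {0..}" for x
  proof -
    have d: "((\<lambda>s. ang_mom N m (r s) (v s)) has_vector_derivative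
       (\<Sum>i<N. m i *\<^sub>R (cross3 (r x i) (accel N m \<gamma> (r x) i) + cross3 (v x i) (v x i)))) (at x within {0..})"
      unfolding ang_mom_def
      apply (rule has_vector_derivative_sum)
      apply (rule bounded_linear.has_vector_derivative[OF bounded_linear_scaleR_right])
      apply (rule bounded_bilinear.has_vector_derivative[OF bb_cross])
      using sol that unfolding is_solution_def by auto
    have "(\<Sum>i<N. m i *\<^sub>R (cross3 (r x i) (accel N m \<gamma> (r x) i) + cross3 (v x i) (v x i))) = 0"
      using accel_sum0 by simp
    with d show ?thesis by simp
  qed
  show ?thesis
    apply (rule has_derivative_zero_unique[OF convex_real_interval(1), where x=t and y=0])
    using hz t unfolding has_vector_derivative_def by auto
qed



lemma pt_ineq:
  fixes n r v :: "real^3" assumes n1: "norm n = 1"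
  shows "\<bar>n \<bullet> cross3 r v\<bar> \<le> norm (r - (n \<bullet> r) *\<^sub>R n) * norm (v - (n \<bullet> v) *\<^sub>R n)"
proof -
  define p where "p = r - (n \<bullet> r) *\<^sub>R n"
  define q where "q = v - (n \<bullet> v) *\<^sub>R n"
  have "n \<bullet> cross3 p q = n \<bullet> cross3 r v"
    unfolding p_def q_def
    by (simp add: cross_mult_left cross_mult_right Cross3.left_diff_distrib Cross3.right_diff_distrib
        inner_diff_right dot_cross_self)
  moreover have "\<bar>n \<bullet> cross3 p q\<bar> \<le> norm n * norm (cross3 p q)" by (rule Cauchy_Schwarz_ineq2)
  moreover have "norm (cross3 p q) \<le> norm p * norm q"
  proof -
    have "(norm (cross3 p q))\<^sup>2 \<le> (norm p * norm q)\<^sup>2"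
      using norm_cross_dot[of p q] by (metis le_add_same_cancel1 zero_le_power2)
    then show ?thesis by (rule power2_le_imp_le) simp
  qed
  ultimately show ?thesis using n1 unfolding p_def q_def by simp
qed

lemma norm_perp:
  fixes n r :: "real^3" assumes n1: "norm n = 1"
  shows "(norm (r - (n \<bullet> r) *\<^sub>R n))\<^sup>2 = (norm r)\<^sup>2 - (n \<bullet> r)\<^sup>2"
proof -
  have nn: "n \<bullet> n = 1" using n1 by (simp add: norm_eq_1)
  show ?thesis
    unfolding power2_norm_eq_inner
    by (simp add: inner_diff_left inner_diff_right inner_commute[of r n] nn power2_eq_square algebra_simps)
qed

lemma ang_ineq:
  assumes n1: "norm n = 1" and mpos: "\<forall>i<N. m i \<ge> 0"
  shows "(n \<bullet> ang_mom N m r v)\<^sup>2 \<le> (gmom N m r - (\<Sum>i<N. m i * (n \<bullet> r i)\<^sup>2)) *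
           (2 * kin N m v - (\<Sum>i<N. m i * (n \<bullet> v i)\<^sup>2))"
proof -
  define P where "P i = norm (r i - (n \<bullet> r i) *\<^sub>R n)" for i
  define Q where "Q i = norm (v i - (n \<bullet> v i) *\<^sub>R n)" for i
  have e: "n \<bullet> ang_mom N m r v = (\<Sum>i<N. m i * (n \<bullet> cross3 (r i) (v i)))"
    by (simp add: ang_mom_def inner_sum_right)
  have "\<bar>n \<bullet> ang_mom N m r v\<bar> \<le> (\<Sum>i<N. \<bar>m i * (n \<bullet> cross3 (r i) (v i))\<bar>)"
    unfolding e by (rule sum_abs)
  also have "\<dots> \<le> (\<Sum>i<N. m i * (P i * Q i))"
  proof (rule sum_mono)
    fix i assume "i \<in> {..<N}"
    then have "m i \<ge> 0" using mpos by auto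
    then show "\<bar>m i * (n \<bullet> cross3 (r i) (v i))\<bar> \<le> m i * (P i * Q i)"
      unfolding P_def Q_def using pt_ineq[OF n1, of "r i" "v i"]
      by (simp add: abs_mult mult_left_mono)
  qed
  also have "\<dots> = (\<Sum>i<N. (sqrt (m i) * P i) * (sqrt (m i) * Q i))"
  proof (rule sum.cong)
    fix i assume "i \<in> {..<N}"
    then have "m i \<ge> 0" using mpos by auto
    then have "sqrt (m i) * sqrt (m i) = m i" by simp
    then show "m i * (P i * Q i) = (sqrt (m i) * P i) * (sqrt (m i) * Q i)"
      by (metis mult.assoc mult.left_commute)
  qed simp
  finally have le1: "\<bar>n \<bullet> ang_mom N m r v\<bar> \<le> (\<Sum>i<N. (sqrt (m i) * P i) * (sqrt (m i) * Q i))" .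
  have "(n \<bullet> ang_mom N m r v)\<^sup>2 = \<bar>n \<bullet> ang_mom N m r v\<bar>\<^sup>2" by simp
  also have "\<dots> \<le> (\<Sum>i<N. (sqrt (m i) * P i) * (sqrt (m i) * Q i))\<^sup>2"
    by (rule power_mono[OF le1]) simp
  also have "\<dots> \<le> (\<Sum>i<N. (sqrt (m i) * P i)\<^sup>2) * (\<Sum>i<N. (sqrt (m i) * Q i)\<^sup>2)"
    by (rule Cauchy_Schwarz_ineq_sum)
  also have "(\<Sum>i<N. (sqrt (m i) * P i)\<^sup>2) = gmom N m r - (\<Sum>i<N. m i * (n \<bullet> r i)\<^sup>2)"
  proof -
    have "(\<Sum>i<N. (sqrt (m i) * P i)\<^sup>2) = (\<Sum>i<N. m i * (norm (r i))\<^sup>2 - m i * (n \<bullet> r i)\<^sup>2)"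
      by (rule sum.cong) (use mpos in \<open>auto simp: power_mult_distrib P_def norm_perp[OF n1] algebra_simps\<close>)
    then show ?thesis by (simp add: gmom_def sum_subtractf)
  qed
  also have "(\<Sum>i<N. (sqrt (m i) * Q i)\<^sup>2) = 2 * kin N m v - (\<Sum>i<N. m i * (n \<bullet> v i)\<^sup>2)"
  proof -
    have "(\<Sum>i<N. (sqrt (m i) * Q i)\<^sup>2) = (\<Sum>i<N. m i * (norm (v i))\<^sup>2 - m i * (n \<bullet> v i)\<^sup>2)"
      by (rule sum.cong) (use mpos in \<open>auto simp: power_mult_distrib Q_def norm_perp[OF n1] algebra_simps\<close>)
    then show ?thesis by (simp add: kin_def sum_subtractf)
  qed
  finally show ?thesis .
qed



lemma triple_cross: "cross3 u (cross3 L u) = (u \<bullet> u) *\<^sub>R L - (u \<bullet> L) *\<^sub>R u"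
  by (simp add: cross3_simps forall_3)

lemma gmom_scale: "gmom N m (\<lambda>i. c *\<^sub>R x i) = c\<^sup>2 * gmom N m x"
  by (simp add: gmom_def sum_distrib_left power_mult_distrib mult_ac)

lemma kin_scale: "kin N m (\<lambda>i. c *\<^sub>R x i) = c\<^sup>2 * kin N m x"
  by (simp add: kin_def sum_distrib_left power_mult_distrib mult_ac)

lemma gmom_nonneg: "\<forall>i<N. m i > 0 \<Longrightarrow> gmom N m x \<ge> 0"
  unfolding gmom_def by (intro sum_nonneg) auto

lemma construct_zero:
  assumes R: "in_R3 N r0" and T: "T \<ge> 0" and g: "gmom N m r0 > 0"
  shows "\<exists>r v. in_R3 N r \<and> ang_mom N m r v = 0 \<and> kin N m v = T \<and> gmom N m r < gmom N m r0"
proof -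
  define r where "r = (\<lambda>i. (1/2::real) *\<^sub>R r0 i)"
  define g0 where "g0 = gmom N m r0"
  define \<mu> where "\<mu> = sqrt (2 * T / (g0 / 4))"
  define v where "v = (\<lambda>i. \<mu> *\<^sub>R r i)"
  have gr: "gmom N m r = g0 / 4" unfolding r_def g0_def gmom_scale by (simp add: power2_eq_square)
  have "in_R3 N r" using R unfolding in_R3_def r_def by auto
  moreover have "ang_mom N m r v = 0" unfolding ang_mom_def v_def by (simp add: cross_mult_right)
  moreover have "kin N m v = T"
  proof -
    have "kin N m v = \<mu>\<^sup>2 * kin N m r" unfolding v_def kin_scale ..
    also have "kin N m r = gmom N m r / 2" by (simp add: kin_def gmom_def)
    also have "\<mu>\<^sup>2 = 2 * T / (g0 / 4)" unfolding \<mu>_def using T g g0_def by simp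
    finally show ?thesis using gr g g0_def by simp
  qed
  moreover have "gmom N m r < gmom N m r0" using gr g g0_def by simp
  ultimately show ?thesis by blast
qed

lemma construct_pos:
  assumes L: "L \<noteq> 0" and T: "T > 0" and mpos: "\<forall>i<N. m i > 0" and N: "N \<ge> 1"
  shows "\<exists>r v. in_R3 N r \<and> ang_mom N m r v = L \<and> kin N m v = T \<and> gmom N m r = (norm L)\<^sup>2 / (2 * T)"
proof -
  obtain u where u0: "u \<noteq> 0" and uL: "u \<bullet> L = 0"
  proof -
    from cross_basis_nonzero[OF L] obtain k where "cross3 L (axis k 1) \<noteq> 0" by blast
    moreover have "cross3 L (axis k 1) \<bullet> L = 0" by (simp add: dot_cross_self)
    ultimately show ?thesis using that by blast
  qed
  define b where "b = cross3 L u"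
  have ub: "cross3 u b = (u \<bullet> u) *\<^sub>R L" unfolding b_def triple_cross uL by simp
  have nb: "(norm b)\<^sup>2 = (norm L)\<^sup>2 * (u \<bullet> u)"
    using norm_cross_dot[of L u] uL unfolding b_def
    by (simp add: inner_commute power_mult_distrib power2_norm_eq_inner)
  have uu: "u \<bullet> u > 0" using u0 by simp
  define S0 where "S0 = (\<Sum>i<N. m i * (real i + 1)\<^sup>2)"
  have S0: "S0 > 0" unfolding S0_def
    by (rule sum_pos2[of _ 0]) (use mpos N in \<open>auto intro: mult_nonneg_nonneg\<close>)
  define Gs where "Gs = (norm L)\<^sup>2 / (2 * T)"
  have Gs: "Gs > 0" unfolding Gs_def using L T by simp
  define s where "s = sqrt (Gs / (S0 * (u \<bullet> u)))"
  have s2: "s\<^sup>2 = Gs / (S0 * (u \<bullet> u))" unfolding s_def using Gs S0 uu by simp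
  have s0: "s > 0" unfolding s_def using Gs S0 uu by simp
  define \<mu> where "\<mu> = 1 / Gs"
  define r where "r = (\<lambda>i. (s * (real i + 1)) *\<^sub>R u)"
  define v where "v = (\<lambda>i. (\<mu> * s * (real i + 1)) *\<^sub>R b)"
  have g: "gmom N m r = s\<^sup>2 * S0 * (u \<bullet> u)"
    unfolding gmom_def r_def S0_def
    by (simp add: sum_distrib_left sum_distrib_right power_mult_distrib power2_norm_eq_inner[symmetric] mult_ac)
  have gG: "gmom N m r = Gs" unfolding g s2 using S0 uu by simp
  have "in_R3 N r" unfolding in_R3_def r_def using u0 s0 by auto
  moreover have "ang_mom N m r v = L"
  proof -
    have "ang_mom N m r v = (\<Sum>i<N. (m i * (s * (real i + 1)) * (\<mu> * s * (real i + 1))) *\<^sub>R cross3 u b)"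
      unfolding ang_mom_def r_def v_def by (simp add: cross_mult_left cross_mult_right mult_ac)
    also have "\<dots> = (\<mu> * (s\<^sup>2 * S0)) *\<^sub>R cross3 u b"
      unfolding S0_def scaleR_sum_left[symmetric]
      by (simp add: sum_distrib_left power2_eq_square mult_ac)
    also have "\<dots> = (\<mu> * Gs) *\<^sub>R L" unfolding ub using gG g by (simp add: mult_ac)
    also have "\<dots> = L" unfolding \<mu>_def using Gs by simp
    finally show ?thesis .
  qed
  moreover have "kin N m v = T"
  proof -
    have "kin N m v = (1/2) * (\<Sum>i<N. m i * ((\<mu> * s * (real i + 1))\<^sup>2 * (norm b)\<^sup>2))"
      unfolding kin_def v_def by (simp add: power_mult_distrib)
    also have "\<dots> = (1/2) * \<mu>\<^sup>2 * (norm L)\<^sup>2 * (s\<^sup>2 * S0 * (u \<bullet> u))"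
      unfolding nb S0_def by (simp add: sum_distrib_left sum_distrib_right power_mult_distrib mult_ac)
    also have "\<dots> = T" unfolding g[symmetric] gG \<mu>_def Gs_def using L T
      by (simp add: power2_eq_square field_simps)
    finally show ?thesis .
  qed
  moreover have "gmom N m r = (norm L)\<^sup>2 / (2 * T)" using gG Gs_def by simp
  ultimately show ?thesis by blast
qed



lemma double_sum_split:
  fixes f g :: "nat \<Rightarrow> real"
  shows "(\<Sum>i<N. \<Sum>j<N. f i + g j) = real N * (\<Sum>i<N. f i) + real N * (\<Sum>j<N. g j)"
  by (simp add: sum.distrib sum_distrib_left mult.commute)

lemma two_ab_le: "2 * \<bar>a\<bar> * \<bar>b\<bar> \<le> a\<^sup>2 + (b::real)\<^sup>2"
proof -
  have "0 \<le> (\<bar>a\<bar> - \<bar>b\<bar>)\<^sup>2" by simp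
  then show ?thesis by (simp add: power2_eq_square algebra_simps)
qed

lemma accel_comp_bound:
  assumes C1: "C1 > 0" and dist: "\<forall>i<N. \<forall>j<N. i \<noteq> j \<longrightarrow> C1 \<le> norm (r j - r i)"
    and mpos: "\<forall>i<N. m i > 0" and g: "\<gamma> > 0" and i: "i < N"
  shows "\<bar>n \<bullet> accel N m \<gamma> r i\<bar> \<le> (\<Sum>j<N. (\<gamma> * (\<Sum>k<N. m k) / C1^3) * (\<bar>n \<bullet> r j\<bar> + \<bar>n \<bullet> r i\<bar>))"
proof -
  define B where "B = \<gamma> * (\<Sum>k<N. m k) / C1^3"
  have M0: "(\<Sum>k<N. m k) \<ge> 0" by (rule sum_nonneg) (use mpos in \<open>auto intro: less_imp_le\<close>)
  have B0: "B \<ge> 0" unfolding B_def by (intro divide_nonneg_pos mult_nonneg_nonneg) (use g C1 M0 in auto)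
  have eq: "n \<bullet> accel N m \<gamma> r i = (\<Sum>j\<in>{..<N}-{i}. (\<gamma> * m j / (norm (r j - r i))^3) * (n \<bullet> r j - n \<bullet> r i))"
    unfolding accel_def by (simp add: inner_sum_right inner_diff_right)
  have "\<bar>n \<bullet> accel N m \<gamma> r i\<bar> \<le> (\<Sum>j\<in>{..<N}-{i}. \<bar>(\<gamma> * m j / (norm (r j - r i))^3) * (n \<bullet> r j - n \<bullet> r i)\<bar>)"
    unfolding eq by (rule sum_abs)
  also have "\<dots> \<le> (\<Sum>j\<in>{..<N}-{i}. B * (\<bar>n \<bullet> r j\<bar> + \<bar>n \<bullet> r i\<bar>))"
  proof (rule sum_mono)
    fix j assume j: "j \<in> {..<N}-{i}"
    then have d: "C1 \<le> norm (r j - r i)" using dist i by auto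
    have mj: "m j \<le> (\<Sum>k<N. m k)" using j mpos by (intro member_le_sum) (auto intro: less_imp_le)
    have c0: "\<gamma> * m j / (norm (r j - r i))^3 \<ge> 0" using g mpos j by auto
    have "\<gamma> * m j / (norm (r j - r i))^3 \<le> \<gamma> * m j / C1^3"
    proof (rule divide_left_mono)
      show "C1 ^ 3 \<le> norm (r j - r i) ^ 3" using d C1 by (auto intro: power_mono)
      show "0 \<le> \<gamma> * m j" using g mpos j by auto
      have "norm (r j - r i) > 0" using d C1 by linarith
      then show "0 < norm (r j - r i) ^ 3 * C1 ^ 3" using C1 by simp
    qed
    also have "\<dots> \<le> B" unfolding B_def
      by (rule divide_right_mono) (use mj g C1 in auto)
    finally have cB: "\<gamma> * m j / (norm (r j - r i))^3 \<le> B" .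
    have "\<bar>n \<bullet> r j - n \<bullet> r i\<bar> \<le> \<bar>n \<bullet> r j\<bar> + \<bar>n \<bullet> r i\<bar>" by linarith
    then show "\<bar>(\<gamma> * m j / (norm (r j - r i))^3) * (n \<bullet> r j - n \<bullet> r i)\<bar> \<le> B * (\<bar>n \<bullet> r j\<bar> + \<bar>n \<bullet> r i\<bar>)"
      unfolding abs_mult using c0 cB by (intro mult_mono) auto
  qed
  also have "\<dots> \<le> (\<Sum>j<N. B * (\<bar>n \<bullet> r j\<bar> + \<bar>n \<bullet> r i\<bar>))"
    by (rule sum_mono2) (use B0 in auto)
  finally show ?thesis unfolding B_def .
qed

lemma mono_fwd:
  fixes f :: "real \<Rightarrow> real"
  assumes ab: "0 \<le> a" "a \<le> b"
    and d: "\<And>s. s \<ge> 0 \<Longrightarrow> (f has_real_derivative f' s) (at s within {0..})"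
    and nn: "\<And>s. a < s \<Longrightarrow> s < b \<Longrightarrow> f' s \<le> 0"
  shows "f b \<le> f a"
proof (rule DERIV_nonpos_imp_decreasing_open[OF ab(2)])
  fix s assume s: "a < s" "s < b"
  then have "s \<in> interior {0..}" using ab by simp
  then have "at s within {0..} = at s" by (rule at_within_interior)
  then show "\<exists>y. (f has_real_derivative y) (at s) \<and> y \<le> 0" using d[of s] nn[OF s] s ab by auto
next
  have "continuous_on {0..} f"
    unfolding continuous_on_eq_continuous_within
    using d DERIV_continuous by fastforce
  then show "continuous_on {a..b} f" by (rule continuous_on_subset) (use ab in auto)
qed

lemma gronwall0:
  fixes E E' :: "real \<Rightarrow> real"
  assumes d: "\<And>s. s \<ge> 0 \<Longrightarrow> (E has_real_derivative E' s) (at s within {0..})"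
    and bnd: "\<And>s. s \<ge> 0 \<Longrightarrow> \<bar>E' s\<bar> \<le> K * E s"
    and nonneg: "\<And>s. s \<ge> 0 \<Longrightarrow> E s \<ge> 0"
    and t0: "t0 \<ge> 0" "E t0 = 0" and t: "t \<ge> 0"
  shows "E t = 0"
proof (cases "t \<ge> t0")
  case True
  define f where "f s = exp (- K * s) * E s" for s
  have df: "(f has_real_derivative (exp (- K * s) * (E' s - K * E s))) (at s within {0..})" if "s \<ge> 0" for s
    unfolding f_def using d[OF that]
    by (auto intro!: derivative_eq_intros simp: algebra_simps)
  have "f t \<le> f t0"
  proof (rule mono_fwd[OF t0(1) True df])
    fix s assume "t0 < s" "s < t"
    then have "E' s - K * E s \<le> 0" using bnd[of s] t0 by auto
    then show "exp (- K * s) * (E' s - K * E s) \<le> 0" by (simp add: mult_nonneg_nonpos)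
  qed
  then have "exp (- K * t) * E t \<le> 0" unfolding f_def using t0 by simp
  then have "E t \<le> 0" by (simp add: mult_le_0_iff)
  then show ?thesis using nonneg[OF t] by simp
next
  case False
  define f where "f s = - (exp (K * s) * E s)" for s
  have df: "(f has_real_derivative (- (exp (K * s) * (E' s + K * E s)))) (at s within {0..})" if "s \<ge> 0" for s
    unfolding f_def using d[OF that]
    by (auto intro!: derivative_eq_intros simp: algebra_simps)
  have "f t0 \<le> f t"
  proof (rule mono_fwd[OF t _ df])
    show "t \<le> t0" using False by simp
    fix s assume "t < s" "s < t0"
    then have "E' s + K * E s \<ge> 0" using bnd[of s] t by auto
    then show "- (exp (K * s) * (E' s + K * E s)) \<le> 0" by simp
  qed
  then have "exp (K * t) * E t \<le> 0" unfolding f_def using t0 by simp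
  then have "E t \<le> 0" by (simp add: mult_le_0_iff)
  then show ?thesis using nonneg[OF t] by simp
qed



lemma plane_unique:
  assumes sol: "is_solution N m \<gamma> r v" and stat: "stationary N r"
    and mpos: "\<forall>i<N. m i > 0" and g: "\<gamma> > 0"
    and t0: "t0 \<ge> 0" and z0: "\<forall>i<N. n \<bullet> r t0 i = 0" and w0: "\<forall>i<N. n \<bullet> v t0 i = 0"
    and t: "t \<ge> 0" and i: "i < N"
  shows "n \<bullet> r t i = 0"
proof -
  obtain C1 C2 where C1: "C1 > 0" and dist: "\<forall>s\<ge>0. \<forall>i<N. \<forall>j<N. i \<noteq> j \<longrightarrow> C1 \<le> norm (r s j - r s i)"
    using stat unfolding stationary_def by auto
  define B where "B = \<gamma> * (\<Sum>k<N. m k) / C1^3"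
  have M0: "(\<Sum>k<N. m k) \<ge> 0" by (rule sum_nonneg) (use mpos in \<open>auto intro: less_imp_le\<close>)
  have B0: "B \<ge> 0" unfolding B_def by (intro divide_nonneg_pos mult_nonneg_nonneg) (use g C1 M0 in auto)
  define K where "K = 1 + 2 * real N * B"
  define z where "z i s = n \<bullet> r s i" for i s
  define w where "w i s = n \<bullet> v s i" for i s
  define a where "a i s = n \<bullet> accel N m \<gamma> (r s) i" for i s
  define E where "E s = (\<Sum>i<N. (z i s)\<^sup>2 + (w i s)\<^sup>2)" for s
  define E' where "E' s = (\<Sum>i<N. 2 * z i s * w i s + 2 * w i s * a i s)" for s
  have dz: "((\<lambda>s. z i s) has_real_derivative w i s) (at s within {0..})" if "s \<ge> 0" "i < N" for i s
  proof -
    have "((\<lambda>s. r s i) has_vector_derivative v s i) (at s within {0..})"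
      using sol that unfolding is_solution_def by auto
    from bounded_linear.has_vector_derivative[OF bounded_linear_inner_right this, of n]
    show ?thesis unfolding z_def w_def has_real_derivative_iff_has_vector_derivative .
  qed
  have dw: "((\<lambda>s. w i s) has_real_derivative a i s) (at s within {0..})" if "s \<ge> 0" "i < N" for i s
  proof -
    have "((\<lambda>s. v s i) has_vector_derivative accel N m \<gamma> (r s) i) (at s within {0..})"
      using sol that unfolding is_solution_def by auto
    from bounded_linear.has_vector_derivative[OF bounded_linear_inner_right this, of n]
    show ?thesis unfolding a_def w_def has_real_derivative_iff_has_vector_derivative .
  qed
  have dE: "(E has_real_derivative E' s) (at s within {0..})" if s: "s \<ge> 0" for s
  proof -
    have "((\<lambda>s. (z i s)\<^sup>2 + (w i s)\<^sup>2) has_real_derivative (2 * z i s * w i s + 2 * w i s * a i s)) (at s within {0..})"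
      if "i < N" for i
      using dz[OF s that] dw[OF s that] by (auto intro!: derivative_eq_intros)
    then have "((\<lambda>s. \<Sum>i<N. (z i s)\<^sup>2 + (w i s)\<^sup>2) has_real_derivative (\<Sum>i<N. 2 * z i s * w i s + 2 * w i s * a i s)) (at s within {0..})"
      by (intro DERIV_sum) auto
    then show ?thesis unfolding E_def[abs_def] E'_def .
  qed
  have bnd: "\<bar>E' s\<bar> \<le> K * E s" if s: "s \<ge> 0" for s
  proof -
    have ab: "\<bar>a i s\<bar> \<le> (\<Sum>j<N. B * (\<bar>z j s\<bar> + \<bar>z i s\<bar>))" if "i < N" for i
      using accel_comp_bound[OF C1 _ mpos g that, of "r s" n] dist s unfolding a_def z_def B_def by auto
    have "\<bar>E' s\<bar> \<le> (\<Sum>i<N. \<bar>2 * z i s * w i s + 2 * w i s * a i s\<bar>)" unfolding E'_def by (rule sum_abs)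
    also have "\<dots> \<le> (\<Sum>i<N. ((z i s)\<^sup>2 + (w i s)\<^sup>2) + (\<Sum>j<N. B * ((2*(w i s)\<^sup>2 + (z i s)\<^sup>2) + (z j s)\<^sup>2)))"
    proof (rule sum_mono)
      fix i assume "i \<in> {..<N}"
      then have iN: "i < N" by simp
      have 1: "\<bar>2 * z i s * w i s\<bar> \<le> (z i s)\<^sup>2 + (w i s)\<^sup>2" using two_ab_le[of "z i s" "w i s"] by (simp add: abs_mult)
      have "\<bar>2 * w i s * a i s\<bar> = 2 * \<bar>w i s\<bar> * \<bar>a i s\<bar>" by (simp add: abs_mult)
      also have "\<dots> \<le> 2 * \<bar>w i s\<bar> * (\<Sum>j<N. B * (\<bar>z j s\<bar> + \<bar>z i s\<bar>))" by (intro mult_left_mono ab iN) auto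
      also have "\<dots> = (\<Sum>j<N. B * (2 * \<bar>w i s\<bar> * \<bar>z j s\<bar> + 2 * \<bar>w i s\<bar> * \<bar>z i s\<bar>))"
        by (simp add: sum_distrib_left algebra_simps)
      also have "\<dots> \<le> (\<Sum>j<N. B * ((2*(w i s)\<^sup>2 + (z i s)\<^sup>2) + (z j s)\<^sup>2))"
      proof (rule sum_mono)
        fix j assume "j \<in> {..<N}"
        have "2 * \<bar>w i s\<bar> * \<bar>z j s\<bar> + 2 * \<bar>w i s\<bar> * \<bar>z i s\<bar> \<le> (2*(w i s)\<^sup>2 + (z i s)\<^sup>2) + (z j s)\<^sup>2"
          using two_ab_le[of "w i s" "z j s"] two_ab_le[of "w i s" "z i s"] by simp
        then show "B * (2 * \<bar>w i s\<bar> * \<bar>z j s\<bar> + 2 * \<bar>w i s\<bar> * \<bar>z i s\<bar>) \<le> B * ((2*(w i s)\<^sup>2 + (z i s)\<^sup>2) + (z j s)\<^sup>2)"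
          by (rule mult_left_mono) (use B0 in auto)
      qed
      finally show "\<bar>2 * z i s * w i s + 2 * w i s * a i s\<bar> \<le> ((z i s)\<^sup>2 + (w i s)\<^sup>2) + (\<Sum>j<N. B * ((2*(w i s)\<^sup>2 + (z i s)\<^sup>2) + (z j s)\<^sup>2))"
        using 1 abs_triangle_ineq[of "2 * z i s * w i s" "2 * w i s * a i s"] by linarith
    qed
    also have "\<dots> = E s + B * (\<Sum>i<N. \<Sum>j<N. (2*(w i s)\<^sup>2 + (z i s)\<^sup>2) + (z j s)\<^sup>2)"
    proof -
      have "B * (\<Sum>i<N. \<Sum>j<N. (2*(w i s)\<^sup>2 + (z i s)\<^sup>2) + (z j s)\<^sup>2) = (\<Sum>i<N. \<Sum>j<N. B * ((2*(w i s)\<^sup>2 + (z i s)\<^sup>2) + (z j s)\<^sup>2))"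
        by (simp only: sum_distrib_left)
      then show ?thesis unfolding E_def by (simp only: sum.distrib[of "\<lambda>i. (z i s)\<^sup>2 + (w i s)\<^sup>2"])
    qed
    also have "(\<Sum>i<N. \<Sum>j<N. (2*(w i s)\<^sup>2 + (z i s)\<^sup>2) + (z j s)\<^sup>2) = real N * (\<Sum>i<N. 2*(w i s)\<^sup>2 + (z i s)\<^sup>2) + real N * (\<Sum>j<N. (z j s)\<^sup>2)"
      by (rule double_sum_split)
    also have "\<dots> = 2 * real N * E s"
      unfolding E_def by (simp add: sum.distrib sum_distrib_left algebra_simps)
    also have "E s + B * (2 * real N * E s) = K * E s" unfolding K_def by (simp add: algebra_simps)
    finally show ?thesis .
  qed
  have Enn: "E s \<ge> 0" for s unfolding E_def by (intro sum_nonneg) auto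
  have E0: "E t0 = 0" unfolding E_def z_def w_def using z0 w0 by simp
  have "E t = 0" by (rule gronwall0[OF dE bnd Enn t0 E0 t])
  then have "(z i t)\<^sup>2 + (w i t)\<^sup>2 = 0" unfolding E_def using i
    by (subst (asm) sum_nonneg_eq_0_iff) auto
  then have "z i t = 0" by (simp add: add_nonneg_eq_0_iff)
  then show ?thesis unfolding z_def .
qed



theorem theorem11p1:
  fixes N :: nat and m :: "nat \<Rightarrow> real" and \<gamma> :: real
    and r v :: "real \<Rightarrow> nat \<Rightarrow> real^3" and t0 :: real
  assumes "N \<ge> 2" and "\<forall>i<N. m i > 0" and "\<gamma> > 0"
    and "is_solution N m \<gamma> r v" and "stationary N r"
    and "t0 \<ge> 0"
    and "gmom N m (r t0) = Wfun N m (ang_mom N m (r 0) (v 0)) (kin N m (v t0))"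
  shows "flat N r"
proof -
  note N = assms(1) and mpos = assms(2) and g = assms(3) and sol = assms(4) and stat = assms(5)
    and t0 = assms(6) and hyp = assms(7)
  define L where "L = ang_mom N m (r 0) (v 0)"
  define T0 where "T0 = kin N m (v t0)"
  define g0 where "g0 = gmom N m (r t0)"
  have Lt0: "ang_mom N m (r t0) (v t0) = L" unfolding L_def by (rule ang_const[OF sol t0])
  have R: "in_R3 N (r t0)" using sol t0 unfolding is_solution_def by auto
  have mnn: "\<forall>i<N. m i \<ge> 0" using mpos by (auto intro: less_imp_le)
  have g0pos: "g0 > 0"
  proof -
    have "r t0 0 \<noteq> r t0 1" using R N unfolding in_R3_def by auto
    then obtain k where k: "k < N" "r t0 k \<noteq> 0" using N by (metis less_le_trans one_less_numeral_iff pos2 semiring_norm(76))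
    have "0 < (\<Sum>i<N. m i * (norm (r t0 i))\<^sup>2)"
      by (rule sum_pos2[of _ k]) (use k mpos in \<open>auto intro: mult_nonneg_nonneg less_imp_le\<close>)
    then show ?thesis unfolding g0_def gmom_def .
  qed
  define S where "S = {gmom N m r | r v. in_R3 N r \<and> ang_mom N m r v = L \<and> kin N m v = T0}"
  have g0S: "g0 = Inf S" using hyp unfolding S_def g0_def L_def T0_def Wfun_def by simp
  have bdd: "bdd_below S" unfolding S_def by (rule bdd_belowI[of _ 0]) (use gmom_nonneg mpos in auto)
  have T0nn: "T0 \<ge> 0" unfolding T0_def kin_def by (auto intro!: sum_nonneg mult_nonneg_nonneg simp: mnn)
  have L0: "L \<noteq> 0"
  proof
    assume L0: "L = 0"
    obtain r' v' where "in_R3 N r'" "ang_mom N m r' v' = 0" "kin N m v' = T0" "gmom N m r' < g0"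
      using construct_zero[OF R T0nn g0pos[unfolded g0_def]] g0_def by blast
    then have "gmom N m r' \<in> S" unfolding S_def L0 by blast
    then have "Inf S \<le> gmom N m r'" by (rule cInf_lower[OF _ bdd])
    then show False using g0S \<open>gmom N m r' < g0\<close> by simp
  qed
  have T0pos: "T0 > 0"
  proof (rule ccontr)
    assume "\<not> T0 > 0"
    then have "(\<Sum>i<N. m i * (norm (v t0 i))\<^sup>2) = 0" using T0nn unfolding T0_def kin_def by simp
    then have "\<forall>i\<in>{..<N}. m i * (norm (v t0 i))\<^sup>2 = 0"
      by (subst (asm) sum_nonneg_eq_0_iff) (auto intro: mult_nonneg_nonneg simp: mnn)
    then have "\<forall>i<N. v t0 i = 0" using mpos by (metis lessThan_iff mult_eq_0_iff norm_eq_zero order_less_irrefl power_eq_0_iff)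
    then have "ang_mom N m (r t0) (v t0) = 0" unfolding ang_mom_def by simp
    then show False using Lt0 L0 by simp
  qed
  have N1: "N \<ge> 1" using N by simp
  from construct_pos[OF L0 T0pos mpos N1] obtain r' v' where
    rv: "in_R3 N r'" "ang_mom N m r' v' = L" "kin N m v' = T0" and gr: "gmom N m r' = (norm L)\<^sup>2 / (2 * T0)"
    by blast
  have "gmom N m r' \<in> S" unfolding S_def using rv by blast
  then have "(norm L)\<^sup>2 / (2 * T0) \<in> S" unfolding gr .
  then have "g0 \<le> (norm L)\<^sup>2 / (2 * T0)" unfolding g0S by (rule cInf_lower[OF _ bdd])
  then have up: "g0 * (2 * T0) \<le> (norm L)\<^sup>2" using T0pos by (simp add: field_simps)
  define n where "n = (1 / norm L) *\<^sub>R L"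
  have n1: "norm n = 1" unfolding n_def using L0 by simp
  have nL: "n \<bullet> L = norm L" unfolding n_def using L0 by (simp add: power2_norm_eq_inner[symmetric] power2_eq_square)
  define Z where "Z = (\<Sum>i<N. m i * (n \<bullet> r t0 i)\<^sup>2)"
  define W where "W = (\<Sum>i<N. m i * (n \<bullet> v t0 i)\<^sup>2)"
  have ineq: "(norm L)\<^sup>2 \<le> (g0 - Z) * (2 * T0 - W)"
    using ang_ineq[OF n1 mnn, of "r t0" "v t0"] unfolding Lt0 nL Z_def W_def g0_def T0_def .
  have sq: "(n \<bullet> x)\<^sup>2 \<le> (norm x)\<^sup>2" for x
  proof -
    have "\<bar>n \<bullet> x\<bar> \<le> norm x" using Cauchy_Schwarz_ineq2[of n x] n1 by simp
    then show ?thesis by (metis abs_ge_zero power2_abs power_mono)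
  qed
  have Z0: "Z \<ge> 0" unfolding Z_def by (intro sum_nonneg) (auto simp: mnn)
  have W0: "W \<ge> 0" unfolding W_def by (intro sum_nonneg) (auto simp: mnn)
  have gZ: "g0 - Z \<ge> 0"
  proof -
    have "Z \<le> g0" unfolding Z_def g0_def gmom_def
      by (rule sum_mono) (use mnn sq in \<open>auto intro: mult_left_mono\<close>)
    then show ?thesis by simp
  qed
  have e: "(g0 - Z) * (2 * T0 - W) = g0 * (2 * T0) - Z * (2 * T0) - W * (g0 - Z)" by (simp add: algebra_simps)
  have p1: "Z * (2 * T0) \<ge> 0" using Z0 T0pos by simp
  have p2: "W * (g0 - Z) \<ge> 0" using W0 gZ by simp
  have "Z * (2 * T0) = 0" using up ineq e p1 p2 by linarith
  then have Zz: "Z = 0" using T0pos by simp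
  have "W * (g0 - Z) = 0" using up ineq e p1 p2 by linarith
  then have "W * g0 = 0" using Zz by simp
  then have Wz: "W = 0" using g0pos by simp
  have z0: "\<forall>i<N. n \<bullet> r t0 i = 0"
  proof -
    have "\<forall>i\<in>{..<N}. m i * (n \<bullet> r t0 i)\<^sup>2 = 0" using Zz unfolding Z_def
      by (subst (asm) sum_nonneg_eq_0_iff) (auto simp: mnn)
    then show ?thesis using mpos by (metis lessThan_iff mult_eq_0_iff order_less_irrefl power_eq_0_iff)
  qed
  have w0: "\<forall>i<N. n \<bullet> v t0 i = 0"
  proof -
    have "\<forall>i\<in>{..<N}. m i * (n \<bullet> v t0 i)\<^sup>2 = 0" using Wz unfolding W_def
      by (subst (asm) sum_nonneg_eq_0_iff) (auto simp: mnn)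
    then show ?thesis using mpos by (metis lessThan_iff mult_eq_0_iff order_less_irrefl power_eq_0_iff)
  qed
  have "\<forall>t\<ge>0. \<forall>i<N. n \<bullet> r t i = 0"
    using plane_unique[OF sol stat mpos g t0 z0 w0] by blast
  moreover have "n \<noteq> 0" using n1 by auto
  ultimately show ?thesis unfolding flat_def by blast
qed

end
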